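(* Let $A<0<B$ be integers and let $\mu\in\mathcal M_0(\mathbb Z)$ satisfy $\mu([A,B])=1$, $\mu(\{A\})>0$, $\mu(\{B\})>0$. Let $$\mathcal R_\mu=\{\mathbf r\in[0,1]^{\mathbb Z}: r_i=1\text{ for } i\notin(A,B),\ \text{and } \mathbb P(S_{\tau(\mathbf r)}=i)\le\mu(\{i\})\text{ for } i\in(A,B)\}.$$ Then $\mathcal R_\mu$ has a maximal element $\mathbf r^{\max}$, i.e. $r^{\max}_i\ge r_i$ for all $i\in\mathbb Z$ and all $\mathbf r\in\mathcal R_\mu$, and $\tau(\mathbf r^{\max})\in\mathrm{SEP}(\mathbb F^{S,\boldsymbol\xi},\mu)$; that is, $S_{\tau(\mathbf r^{\max})}\sim\mu$ and $(S_{t\wedge\tau(\mathbf r^{\max})})_{t\ge0}$ is uniformly integrable.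
   Context: $S=(S_t)_{t\ge0}$ is a simple symmetric random walk on $\mathbb Z$ with $S_0=0$ (discrete time). $\mathcal M_0(\mathbb Z)$ is the set of probability measures on $\mathbb Z$ with finite first moment and mean zero. For $\mathbf r=(r_x)_{x\in\mathbb Z}\in[0,1]^{\mathbb Z}$, let $\boldsymbol\xi=\{\xi_{t,x}\}_{t\ge0,x\in\mathbb Z}$ be Bernoulli random variables, mutually independent and independent of $S$, with $\mathbb P(\xi_{t,x}=0)=r_x=1-\mathbb P(\xi_{t,x}=1)$, and $\tau(\mathbf r):=\inf\{t\ge0:\xi_{t,S_t}=0\}$, a stopping time for $\mathbb F^{S,\boldsymbol\xi}$, $\mathcal F^{S,\boldsymbol\xi}_t:=\sigma(S_u,\xi_{u,S_u}:u\le t)$. $\mathrm{SEP}(\mathbb F,\mu)$ is the set of $\mathbb F$-stopping times $\tau$ with $S_\tau\sim\mu$ such that $(S_{t\wedge\tau})_{t\ge0}$ is uniformly integrable. *)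

theory Defs
  imports "HOL-Probability.Probability"
begin

text \<open>A sample point is a pair (coins, xis): coins u is the direction of the
  (u+1)-th step of the walk (True = +1, False = -1); xis (t,x) is the Bernoulli variable
  xi_{t,x} (True = 1, False = 0).\<close>

type_synonym sample = "(nat \<Rightarrow> bool) \<times> (nat \<times> int \<Rightarrow> bool)"

definition walk :: "sample \<Rightarrow> nat \<Rightarrow> int" where
  "walk \<omega> t = (\<Sum>u<t. if fst \<omega> u then 1 else -1)"

definition xi :: "sample \<Rightarrow> nat \<Rightarrow> int \<Rightarrow> bool" where
  "xi \<omega> t x = snd \<omega> (t, x)"

definition model :: "(int \<Rightarrow> real) \<Rightarrow> sample measure" where
  "model r = (PiM UNIV (\<lambda>_. measure_pmf (bernoulli_pmf (1/2))))
              \<Otimes>\<^sub>M (PiM UNIV (\<lambda>(t, x). measure_pmf (bernoulli_pmf (1 - r x))))"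

definition tau :: "sample \<Rightarrow> enat" where
  "tau \<omega> = (if \<exists>t. \<not> xi \<omega> t (walk \<omega> t) then enat (LEAST t. \<not> xi \<omega> t (walk \<omega> t)) else \<infinity>)"

definition filt :: "(int \<Rightarrow> real) \<Rightarrow> nat \<Rightarrow> sample measure" where
  "filt r t = vimage_algebra (space (model r))
     (\<lambda>\<omega>. restrict (\<lambda>u. (walk \<omega> u, xi \<omega> u (walk \<omega> u))) {..t})
     (PiM {..t} (\<lambda>_. count_space (UNIV :: (int \<times> bool) set)))"

definition stopping_time_enat :: "(nat \<Rightarrow> 'a measure) \<Rightarrow> ('a \<Rightarrow> enat) \<Rightarrow> bool" where
  "stopping_time_enat F T \<longleftrightarrow> (\<forall>t::nat. Measurable.pred (F t) (\<lambda>\<omega>. T \<omega> \<le> enat t))"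

definition stopped :: "sample \<Rightarrow> nat \<Rightarrow> int" where
  "stopped \<omega> t = walk \<omega> (case tau \<omega> of enat n \<Rightarrow> min t n | \<infinity> \<Rightarrow> t)"

definition uniformly_integrable :: "'a measure \<Rightarrow> (nat \<Rightarrow> 'a \<Rightarrow> real) \<Rightarrow> bool" where
  "uniformly_integrable M X \<longleftrightarrow>
     (\<forall>t. X t \<in> borel_measurable M) \<and>
     ((\<lambda>K::real. SUP t. \<integral>\<^sup>+ \<omega>. ennreal \<bar>X t \<omega>\<bar> * indicator {\<omega> \<in> space M. K < \<bar>X t \<omega>\<bar>} \<omega> \<partial>M)
        \<longlongrightarrow> 0) at_top"

definition hit_prob :: "(int \<Rightarrow> real) \<Rightarrow> int \<Rightarrow> real" where
  "hit_prob r i = measure (model r) {\<omega> \<in> space (model r). \<exists>n. tau \<omega> = enat n \<and> walk \<omega> n = i}"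

definition R_set :: "int \<Rightarrow> int \<Rightarrow> int pmf \<Rightarrow> (int \<Rightarrow> real) set" where
  "R_set A B \<mu> = {r. (\<forall>x. 0 \<le> r x \<and> r x \<le> 1) \<and> (\<forall>i. i \<notin> {A<..<B} \<longrightarrow> r i = 1)
                    \<and> (\<forall>i \<in> {A<..<B}. hit_prob r i \<le> pmf \<mu> i)}"

end

theory Submission
  imports Defs
begin


abbreviation M1 :: "(nat \<Rightarrow> bool) measure" where
  "M1 \<equiv> PiM UNIV (\<lambda>_. measure_pmf (bernoulli_pmf (1/2)))"
abbreviation M2 :: "(int \<Rightarrow> real) \<Rightarrow> (nat \<times> int \<Rightarrow> bool) measure" where
  "M2 r \<equiv> PiM UNIV (\<lambda>(t, x). measure_pmf (bernoulli_pmf (1 - r x)))"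

lemma prob_M1: "prob_space M1"
  by (rule prob_space_PiM) (simp add: prob_space_measure_pmf)
lemma prob_M2: "prob_space (M2 r)"
  by (rule prob_space_PiM) (auto simp: prob_space_measure_pmf split: prod.splits)

lemma space_M1[simp]: "space M1 = UNIV"
  by (auto simp: space_PiM PiE_UNIV_domain)
lemma space_M2[simp]: "space (M2 r) = UNIV"
  by (auto simp: space_PiM PiE_UNIV_domain split: prod.splits)
lemma space_model[simp]: "space (model r) = UNIV"
  by (simp add: model_def space_pair_measure)

lemma emeasure_M1_cyl:
  "emeasure M1 {c. \<forall>t<n. c t = q t} = ennreal ((1/2) ^ n)"
proof -
  interpret product_prob_space "\<lambda>_. measure_pmf (bernoulli_pmf (1/2))" "UNIV :: nat set"
    by unfold_locales (simp add: prob_space_measure_pmf)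
  have "{c. \<forall>t<n. c t = q t} = {x\<in>space M1. \<forall>i\<in>{..<n}. x i \<in> {q i}}" by auto
  also have "emeasure M1 \<dots> = (\<Prod>i\<in>{..<n}. emeasure (measure_pmf (bernoulli_pmf (1/2))) {q i})"
    by (rule emeasure_PiM_Collect) auto
  also have "\<dots> = (\<Prod>i\<in>{..<n}. ennreal (1/2))"
    by (intro prod.cong refl) (simp add: emeasure_pmf_single)
  also have "\<dots> = ennreal ((1/2)^n)" by (simp only: prod_constant card_lessThan ennreal_power[symmetric, of "1/2"] zero_le_divide_1_iff zero_le_numeral)
  finally show ?thesis .
qed

lemma emeasure_M2_cyl:
  shows "emeasure (M2 r) {\<xi>. \<forall>t<n. \<xi> (t, w t) \<in> Q t}
     = (\<Prod>t<n. emeasure (measure_pmf (bernoulli_pmf (1 - r (w t)))) (Q t))"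
proof -
  interpret product_prob_space "\<lambda>(t, x). measure_pmf (bernoulli_pmf (1 - r x))" "UNIV :: (nat\<times>int) set"
    by unfold_locales (auto simp: prob_space_measure_pmf split: prod.splits)
  let ?J = "(\<lambda>t. (t, w t)) ` {..<n}"
  have inj: "inj_on (\<lambda>t. (t, w t)) {..<n}" by (auto simp: inj_on_def)
  have "{\<xi>. \<forall>t<n. \<xi> (t, w t) \<in> Q t} = {x\<in>space (M2 r). \<forall>i\<in>?J. x i \<in> Q (fst i)}" by auto
  also have "emeasure (M2 r) \<dots> = (\<Prod>i\<in>?J. emeasure ((\<lambda>(t, x). measure_pmf (bernoulli_pmf (1 - r x))) i) (Q (fst i)))"
    by (rule emeasure_PiM_Collect) auto
  also have "\<dots> = (\<Prod>t<n. emeasure (measure_pmf (bernoulli_pmf (1 - r (w t)))) (Q t))"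
    by (subst prod.reindex[OF inj]) simp
  finally show ?thesis .
qed


definition wl :: "bool list \<Rightarrow> nat \<Rightarrow> int" where
  "wl p t = (\<Sum>u<t. if p ! u then 1 else -1)"

definition wt :: "(int \<Rightarrow> real) \<Rightarrow> bool list \<Rightarrow> real" where
  "wt r p = (1/2) ^ length p * (\<Prod>t<length p. 1 - r (wl p t))"

definition Ls :: "nat \<Rightarrow> bool list set" where
  "Ls n = {p. length p = n}"

definition U :: "(int \<Rightarrow> real) \<Rightarrow> nat \<Rightarrow> int \<Rightarrow> real" where
  "U r n x = (\<Sum>p\<in>Ls n. if wl p n = x then wt r p else 0)"

lemma finite_Ls[simp]: "finite (Ls n)"
  unfolding Ls_def using finite_lists_length_eq[of "UNIV::bool set" n] by simp

lemma wl_0[simp]: "wl p 0 = 0" by (simp add: wl_def)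
lemma wl_Suc: "wl p (Suc t) = wl p t + (if p ! t then 1 else -1)"
  by (simp add: wl_def)

lemma wl_append: "t \<le> length q \<Longrightarrow> wl (q @ [b]) t = wl q t"
  unfolding wl_def by (intro sum.cong refl) (simp add: nth_append)

lemma wl_append_last: "wl (q @ [b]) (Suc (length q)) = wl q (length q) + (if b then 1 else -1)"
  by (simp add: wl_Suc wl_append)

lemma wt_append: "wt r (q @ [b]) = 1/2 * (1 - r (wl q (length q))) * wt r q"
proof -
  have "(\<Prod>t<Suc (length q). 1 - r (wl (q @ [b]) t)) = (\<Prod>t<length q. 1 - r (wl q t)) * (1 - r (wl q (length q)))"
    by (simp add: wl_append)
  then show ?thesis unfolding wt_def by simp
qed

lemma Ls_Suc: "Ls (Suc n) = (\<lambda>(q, b). q @ [b]) ` (Ls n \<times> UNIV)"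
proof (intro set_eqI iffI)
  fix p assume "p \<in> Ls (Suc n)"
  then have "p = butlast p @ [last p]" "butlast p \<in> Ls n"
    by (auto simp: Ls_def) (metis append_butlast_last_id list.size(3) nat.distinct(1))
  then show "p \<in> (\<lambda>(q, b). q @ [b]) ` (Ls n \<times> UNIV)" by force
qed (auto simp: Ls_def)

lemma inj_snoc: "inj_on (\<lambda>(q, b). q @ [b]) X"
  by (auto simp: inj_on_def)

lemma U_0: "U r 0 x = (if x = 0 then 1 else 0)"
proof -
  have "Ls 0 = {[]}" by (auto simp: Ls_def)
  then show ?thesis by (simp add: U_def wt_def)
qed

lemma U_Suc: "U r (Suc n) x = 1/2 * (1 - r (x - 1)) * U r n (x - 1) + 1/2 * (1 - r (x + 1)) * U r n (x + 1)"
proof -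
  have "U r (Suc n) x = (\<Sum>(q, b)\<in>Ls n \<times> UNIV. if wl (q @ [b]) (Suc n) = x then wt r (q @ [b]) else 0)"
    unfolding U_def Ls_Suc by (subst sum.reindex[OF inj_snoc]) (simp add: case_prod_unfold)
  also have "\<dots> = (\<Sum>q\<in>Ls n. \<Sum>b\<in>UNIV. if wl (q @ [b]) (Suc n) = x then wt r (q @ [b]) else 0)"
    by (rule sum.cartesian_product[symmetric])
  also have "\<dots> = (\<Sum>q\<in>Ls n. 1/2 * (1 - r (x - 1)) * (if wl q n = x - 1 then wt r q else 0)
                  + 1/2 * (1 - r (x + 1)) * (if wl q n = x + 1 then wt r q else 0))"
  proof (intro sum.cong refl)
    fix q assume "q \<in> Ls n"
    then have n: "length q = n" by (simp add: Ls_def)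
    show "(\<Sum>b\<in>UNIV. if wl (q @ [b]) (Suc n) = x then wt r (q @ [b]) else 0) =
      1/2 * (1 - r (x - 1)) * (if wl q n = x - 1 then wt r q else 0)
                  + 1/2 * (1 - r (x + 1)) * (if wl q n = x + 1 then wt r q else 0)"
      using wl_append_last[of q] wt_append[of r q] n by (auto simp: UNIV_bool)
  qed
  also have "\<dots> = 1/2 * (1 - r (x - 1)) * U r n (x - 1) + 1/2 * (1 - r (x + 1)) * U r n (x + 1)"
    unfolding U_def by (simp add: sum.distrib sum_distrib_left)
  finally show ?thesis .
qed



definition Cyl :: "bool list \<Rightarrow> (nat \<Rightarrow> bool) set" where
  "Cyl p = {c. \<forall>t<length p. c t = p ! t}"

definition valid01 :: "(int \<Rightarrow> real) \<Rightarrow> bool" where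
  "valid01 r \<longleftrightarrow> (\<forall>x. 0 \<le> r x \<and> r x \<le> 1)"

lemma sets_Cyl[measurable]: "Cyl p \<in> sets M1"
proof -
  have "Cyl p = {x\<in>space M1. \<forall>i\<in>{..<length p}. x i \<in> {p ! i}}" by (auto simp: Cyl_def)
  also have "\<dots> \<in> sets M1" by (intro sets.sets_Collect_finite_All sets_Collect_single) auto
  finally show ?thesis .
qed

lemma sets_M2_cyl[measurable]: "{\<xi>. \<forall>t<m. \<xi> (t, w t) \<in> Q t} \<in> sets (M2 r)"
proof -
  have "{\<xi>. \<forall>t<m. \<xi> (t, w t) \<in> Q t} = {x\<in>space (M2 r). \<forall>i\<in>{..<m}. x (i, w i) \<in> Q i}" by auto
  also have "\<dots> \<in> sets (M2 r)" by (intro sets.sets_Collect_finite_All sets_Collect_single) (auto split: prod.splits)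
  finally show ?thesis .
qed

lemma sets_M2_alive[measurable]: "{\<xi>. \<forall>t<m. \<xi> (t, w t)} \<in> sets (M2 r)"
  using sets_M2_cyl[of m w "\<lambda>_. {True}"] by simp

lemma emeasure_Cyl: "emeasure M1 (Cyl p) = ennreal ((1/2) ^ length p)"
  unfolding Cyl_def by (rule emeasure_M1_cyl)

lemma M2_alive:
  assumes "valid01 r"
  shows "emeasure (M2 r) {\<xi>. \<forall>t<n. \<xi> (t, w t)} = ennreal (\<Prod>t<n. 1 - r (w t))"
proof -
  have "{\<xi>. \<forall>t<n. \<xi> (t, w t)} = {\<xi>. \<forall>t<n. \<xi> (t, w t) \<in> {True}}" by simp
  then show ?thesis using assms unfolding valid01_def
    by (simp only:) (subst emeasure_M2_cyl, simp add: emeasure_pmf_single prod_ennreal)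
qed

lemma M2_kill:
  assumes "valid01 r"
  shows "emeasure (M2 r) {\<xi>. \<forall>t<Suc n. \<xi> (t, w t) \<in> (if t = n then {False} else {True})}
     = ennreal ((\<Prod>t<n. 1 - r (w t)) * r (w n))"
proof -
  have "emeasure (M2 r) {\<xi>. \<forall>t<Suc n. \<xi> (t, w t) \<in> (if t = n then {False} else {True})}
     = (\<Prod>t<Suc n. emeasure (measure_pmf (bernoulli_pmf (1 - r (w t)))) (if t = n then {False} else {True}))"
    by (rule emeasure_M2_cyl)
  also have "\<dots> = (\<Prod>t<n. ennreal (1 - r (w t))) * ennreal (r (w n))"
    using assms unfolding valid01_def by (simp add: emeasure_pmf_single)
  also have "\<dots> = ennreal ((\<Prod>t<n. 1 - r (w t)) * r (w n))"
    using assms unfolding valid01_def by (simp add: prod_ennreal ennreal_mult prod_nonneg)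
  finally show ?thesis .
qed

lemma Cyl_disj: "p \<in> Ls n \<Longrightarrow> q \<in> Ls n \<Longrightarrow> p \<noteq> q \<Longrightarrow> Cyl p \<inter> Cyl q = {}"
  by (auto simp: Cyl_def Ls_def intro: nth_equalityI)

lemma emeasure_rect_union:
  assumes "F \<subseteq> Ls n" "\<And>p. p \<in> F \<Longrightarrow> D p \<in> sets (M2 r)"
  shows "emeasure (model r) (\<Union>p\<in>F. Cyl p \<times> D p) = (\<Sum>p\<in>F. ennreal ((1/2)^n) * emeasure (M2 r) (D p))"
proof -
  interpret M2: sigma_finite_measure "M2 r" by (rule prob_space_imp_sigma_finite[OF prob_M2])
  have fin: "finite F" using assms(1) finite_subset finite_Ls by blast
  have "emeasure (model r) (\<Union>p\<in>F. Cyl p \<times> D p) = (\<Sum>p\<in>F. emeasure (model r) (Cyl p \<times> D p))"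
  proof (rule sum_emeasure[symmetric, OF _ _ fin])
    show "(\<lambda>p. Cyl p \<times> D p) ` F \<subseteq> sets (model r)"
      using assms(2) by (auto simp: model_def)
    show "disjoint_family_on (\<lambda>p. Cyl p \<times> D p) F"
      unfolding disjoint_family_on_def using Cyl_disj assms(1) by blast
  qed
  also have "\<dots> = (\<Sum>p\<in>F. ennreal ((1/2)^n) * emeasure (M2 r) (D p))"
  proof (intro sum.cong refl)
    fix p assume p: "p \<in> F"
    then have "length p = n" using assms(1) by (auto simp: Ls_def)
    then show "emeasure (model r) (Cyl p \<times> D p) = ennreal ((1/2)^n) * emeasure (M2 r) (D p)"
      unfolding model_def using M2.emeasure_pair_measure_Times[OF sets_Cyl assms(2)[OF p]]
      by (simp add: emeasure_Cyl)
  qed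
  finally show ?thesis .
qed

lemma walk_wl: "(\<And>u. u < t \<Longrightarrow> fst \<omega> u = p ! u) \<Longrightarrow> walk \<omega> t = wl p t"
  unfolding walk_def wl_def by (intro sum.cong refl) auto

definition killev :: "nat \<Rightarrow> int \<Rightarrow> sample set" where
  "killev n x = {\<omega>. (\<forall>t<n. xi \<omega> t (walk \<omega> t)) \<and> \<not> xi \<omega> n (walk \<omega> n) \<and> walk \<omega> n = x}"

definition aliveev :: "nat \<Rightarrow> sample set" where
  "aliveev n = {\<omega>. \<forall>t<n. xi \<omega> t (walk \<omega> t)}"

lemma pref_Ls: "map c [0..<n] \<in> Ls n" by (simp add: Ls_def)
lemma pref_Cyl: "c \<in> Cyl (map c [0..<n])" by (simp add: Cyl_def)

lemma killev_eq: "killev n x = (\<Union>p\<in>{p\<in>Ls n. wl p n = x}. Cyl p \<times>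
   {\<xi>. \<forall>t<Suc n. \<xi> (t, wl p t) \<in> (if t = n then {False} else {True})})"
proof (intro set_eqI iffI)
  fix \<omega> assume a: "\<omega> \<in> killev n x"
  obtain c \<xi> where om: "\<omega> = (c, \<xi>)" by fastforce
  let ?p = "map c [0..<n]"
  have w: "walk \<omega> t = wl ?p t" if "t \<le> n" for t
    using that by (intro walk_wl) (auto simp: om)
  show "\<omega> \<in> (\<Union>p\<in>{p\<in>Ls n. wl p n = x}. Cyl p \<times>
   {\<xi>. \<forall>t<Suc n. \<xi> (t, wl p t) \<in> (if t = n then {False} else {True})})"
    using a w pref_Ls[of c n] pref_Cyl[of c n]
    by (auto simp: killev_def xi_def om less_Suc_eq intro!: bexI[of _ ?p])
next
  fix \<omega> assume "\<omega> \<in> (\<Union>p\<in>{p\<in>Ls n. wl p n = x}. Cyl p \<times>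
   {\<xi>. \<forall>t<Suc n. \<xi> (t, wl p t) \<in> (if t = n then {False} else {True})})"
  then obtain p where p: "p \<in> Ls n" "wl p n = x" "fst \<omega> \<in> Cyl p"
    and q: "\<forall>t<Suc n. snd \<omega> (t, wl p t) \<in> (if t = n then {False} else {True})" by auto
  have w: "walk \<omega> t = wl p t" if "t \<le> n" for t
    using that p by (intro walk_wl) (auto simp: Cyl_def Ls_def)
  show "\<omega> \<in> killev n x"
    unfolding killev_def xi_def using p q w
    by (auto simp: less_Suc_eq)
qed

lemma aliveev_eq: "aliveev n = (\<Union>p\<in>Ls n. Cyl p \<times> {\<xi>. \<forall>t<n. \<xi> (t, wl p t)})"
proof (intro set_eqI iffI)
  fix \<omega> assume a: "\<omega> \<in> aliveev n"
  obtain c \<xi> where om: "\<omega> = (c, \<xi>)" by fastforce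
  let ?p = "map c [0..<n]"
  have w: "walk \<omega> t = wl ?p t" if "t \<le> n" for t
    using that by (intro walk_wl) (auto simp: om)
  show "\<omega> \<in> (\<Union>p\<in>Ls n. Cyl p \<times> {\<xi>. \<forall>t<n. \<xi> (t, wl p t)})"
    using a w pref_Ls[of c n] pref_Cyl[of c n]
    by (auto simp: aliveev_def xi_def om intro!: bexI[of _ ?p])
next
  fix \<omega> assume "\<omega> \<in> (\<Union>p\<in>Ls n. Cyl p \<times> {\<xi>. \<forall>t<n. \<xi> (t, wl p t)})"
  then obtain p where p: "p \<in> Ls n" "fst \<omega> \<in> Cyl p"
    and q: "\<forall>t<n. snd \<omega> (t, wl p t)" by auto
  have w: "walk \<omega> t = wl p t" if "t \<le> n" for t
    using that p by (intro walk_wl) (auto simp: Cyl_def Ls_def)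
  show "\<omega> \<in> aliveev n"
    unfolding aliveev_def xi_def using p q w by auto
qed

lemma sets_killev[measurable]: "killev n x \<in> sets (model r)"
  unfolding killev_eq model_def by (intro sets.finite_UN) auto

lemma sets_aliveev[measurable]: "aliveev n \<in> sets (model r)"
  unfolding aliveev_eq model_def by (intro sets.finite_UN) auto

lemma emeasure_killev:
  assumes "valid01 r"
  shows "emeasure (model r) (killev n x) = ennreal (r x * U r n x)"
proof -
  have "emeasure (model r) (killev n x) = (\<Sum>p\<in>{p\<in>Ls n. wl p n = x}. ennreal ((1/2)^n) *
      ennreal ((\<Prod>t<n. 1 - r (wl p t)) * r (wl p n)))"
    unfolding killev_eq by (subst emeasure_rect_union[of _ n]) (auto simp: M2_kill[OF assms])
  also have "\<dots> = (\<Sum>p\<in>{p\<in>Ls n. wl p n = x}. ennreal (r x * wt r p))"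
    using assms by (intro sum.cong refl) (auto simp: valid01_def wt_def Ls_def ennreal_mult[symmetric] prod_nonneg mult_ac)
  also have "\<dots> = ennreal (\<Sum>p\<in>{p\<in>Ls n. wl p n = x}. r x * wt r p)"
    using assms by (intro sum_ennreal) (auto simp: valid01_def wt_def prod_nonneg)
  also have "(\<Sum>p\<in>{p\<in>Ls n. wl p n = x}. r x * wt r p) = (\<Sum>p\<in>Ls n. if wl p n = x then r x * wt r p else 0)"
    by (rule sum.inter_filter) simp
  also have "\<dots> = r x * U r n x"
    unfolding U_def sum_distrib_left by (intro sum.cong) auto
  finally show ?thesis .
qed

lemma emeasure_aliveev:
  assumes "valid01 r"
  shows "emeasure (model r) (aliveev n) = ennreal (\<Sum>p\<in>Ls n. wt r p)"
proof -
  have "emeasure (model r) (aliveev n) = (\<Sum>p\<in>Ls n. ennreal ((1/2)^n) *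
      ennreal (\<Prod>t<n. 1 - r (wl p t)))"
    unfolding aliveev_eq by (subst emeasure_rect_union[of _ n]) (auto simp: M2_alive[OF assms])
  also have "\<dots> = (\<Sum>p\<in>Ls n. ennreal (wt r p))"
    using assms by (intro sum.cong refl) (auto simp: valid01_def wt_def Ls_def ennreal_mult[symmetric] prod_nonneg)
  also have "\<dots> = ennreal (\<Sum>p\<in>Ls n. wt r p)"
    using assms by (intro sum_ennreal) (auto simp: valid01_def wt_def prod_nonneg)
  finally show ?thesis .
qed



definition VV :: "int \<Rightarrow> int \<Rightarrow> (int \<Rightarrow> real) \<Rightarrow> bool" where
  "VV A B r \<longleftrightarrow> valid01 r \<and> (\<forall>x. x \<notin> {A<..<B} \<longrightarrow> r x = 1)"

lemma wt_nonneg: "valid01 r \<Longrightarrow> 0 \<le> wt r p"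
  unfolding wt_def valid01_def by (intro mult_nonneg_nonneg prod_nonneg) auto

lemma U_nonneg: "valid01 r \<Longrightarrow> 0 \<le> U r n x"
  unfolding U_def by (intro sum_nonneg) (auto simp: wt_nonneg)

lemma sum_int_shift: "(\<Sum>x\<in>{a..b::int}. f x) = (\<Sum>y\<in>{a-k..b-k}. f (y + k))"
  by (rule sum.reindex_bij_witness[of _ "\<lambda>y. y + k" "\<lambda>x. x - k"]) auto

context
  fixes A B :: int
  assumes A0: "A < 0" and B0: "0 < B"
begin

lemma VV_valid: "VV A B r \<Longrightarrow> valid01 r" by (simp add: VV_def)

lemma VV_out: "VV A B r \<Longrightarrow> x \<notin> {A<..<B} \<Longrightarrow> r x = 1" by (simp add: VV_def)

lemma U_out:
  assumes "VV A B r" "x \<notin> {A..B}"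
  shows "U r n x = 0"
proof (cases n)
  case 0 then show ?thesis using assms A0 B0 by (auto simp: U_0)
next
  case (Suc m)
  have "r (x - 1) = 1" "r (x + 1) = 1" using assms by (auto intro!: VV_out)
  then show ?thesis by (simp add: Suc U_Suc)
qed

lemma U_step:
  assumes V: "VV A B r"
  shows "(\<Sum>x\<in>{A..B}. \<phi> x * U r (Suc n) x) =
     (\<Sum>y\<in>{A<..<B}. (1 - r y) * U r n y * ((\<phi> (y + 1) + \<phi> (y - 1)) / 2))"
proof -
  define g where "g y = (1 - r y) * U r n y" for y
  have g0: "g y = 0" if "y \<notin> {A<..<B}" for y using VV_out[OF V that] by (simp add: g_def)
  have "(\<Sum>x\<in>{A..B}. \<phi> x * U r (Suc n) x) =
      1/2 * (\<Sum>x\<in>{A..B}. \<phi> x * g (x - 1)) + 1/2 * (\<Sum>x\<in>{A..B}. \<phi> x * g (x + 1))"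
    unfolding U_Suc g_def sum_distrib_left sum.distrib[symmetric]
    by (intro sum.cong refl) (simp add: algebra_simps)
  also have "(\<Sum>x\<in>{A..B}. \<phi> x * g (x - 1)) = (\<Sum>y\<in>{A-1..B-1}. \<phi> (y + 1) * g y)"
    by (subst sum_int_shift[where k=1]) simp
  also have "\<dots> = (\<Sum>y\<in>{A<..<B}. \<phi> (y + 1) * g y)"
    by (rule sum.mono_neutral_right) (auto simp: g0)
  also have "(\<Sum>x\<in>{A..B}. \<phi> x * g (x + 1)) = (\<Sum>y\<in>{A+1..B+1}. \<phi> (y - 1) * g y)"
    by (subst sum_int_shift[where k="-1"]) simp
  also have "\<dots> = (\<Sum>y\<in>{A<..<B}. \<phi> (y - 1) * g y)"
    by (rule sum.mono_neutral_right) (auto simp: g0)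
  finally show ?thesis
    unfolding g_def sum_distrib_left sum.distrib[symmetric]
    by (simp add: algebra_simps add_divide_distrib)
qed

lemma sum_AB_to_int:
  assumes "VV A B r"
  shows "(\<Sum>y\<in>{A..B}. (1 - r y) * f y) = (\<Sum>y\<in>{A<..<B}. (1 - r y) * f y)"
  by (rule sum.mono_neutral_right) (auto simp: VV_out[OF assms])

lemma mass_step:
  assumes V: "VV A B r"
  shows "(\<Sum>x\<in>{A..B}. U r (Suc n) x) = (\<Sum>x\<in>{A..B}. U r n x) - (\<Sum>x\<in>{A..B}. r x * U r n x)"
proof -
  have "(\<Sum>x\<in>{A..B}. U r (Suc n) x) = (\<Sum>x\<in>{A..B}. 1 * U r (Suc n) x)" by simp
  also have "\<dots> = (\<Sum>y\<in>{A<..<B}. (1 - r y) * U r n y)"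
    by (subst U_step[OF V]) simp
  also have "\<dots> = (\<Sum>y\<in>{A..B}. (1 - r y) * U r n y)"
    by (rule sum_AB_to_int[OF V, symmetric])
  finally show ?thesis by (simp add: algebra_simps sum_subtractf)
qed

lemma mass_total:
  assumes V: "VV A B r"
  shows "(\<Sum>x\<in>{A..B}. U r n x) + (\<Sum>k<n. \<Sum>x\<in>{A..B}. r x * U r k x) = 1"
proof (induction n)
  case 0
  have "(\<Sum>x\<in>{A..B}. U r 0 x) = 1" using A0 B0 by (simp add: U_0)
  then show ?case by simp
next
  case (Suc n) then show ?case by (simp add: mass_step[OF V])
qed

lemma mean_step:
  assumes V: "VV A B r"
  shows "(\<Sum>x\<in>{A..B}. of_int x * U r (Suc n) x) =
    (\<Sum>x\<in>{A..B}. of_int x * U r n x) - (\<Sum>x\<in>{A..B}. of_int x * (r x * U r n x))"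
proof -
  have "(\<Sum>x\<in>{A..B}. of_int x * U r (Suc n) x) = (\<Sum>y\<in>{A<..<B}. (1 - r y) * (of_int y * U r n y))"
    by (subst U_step[OF V]) (simp add: algebra_simps)
  also have "\<dots> = (\<Sum>y\<in>{A..B}. (1 - r y) * (of_int y * U r n y))"
    by (rule sum_AB_to_int[OF V, symmetric])
  finally show ?thesis by (simp add: algebra_simps sum_subtractf)
qed

lemma mean_total:
  assumes V: "VV A B r"
  shows "(\<Sum>x\<in>{A..B}. of_int x * U r n x) + (\<Sum>k<n. \<Sum>x\<in>{A..B}. of_int x * (r x * U r k x)) = 0"
proof (induction n)
  case 0
  show ?case by (simp add: U_0 if_distrib cong: if_cong)
next
  case (Suc n) then show ?case by (simp add: mean_step[OF V])
qed

definition ff :: "int \<Rightarrow> real" where "ff x = of_int ((x - A) * (B - x))"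

lemma ff_step: "(ff (y + 1) + ff (y - 1)) / 2 = ff y - 1"
proof -
  have "((y+1) - A)*(B - (y+1)) + ((y-1) - A)*(B-(y-1)) = 2*((y-A)*(B-y)) - 2"
    by (simp add: algebra_simps)
  then have "ff (y + 1) + ff (y - 1) = 2 * ff y - 2"
    unfolding ff_def by (metis (mono_tags) of_int_add of_int_diff of_int_mult of_int_numeral)
  then show ?thesis by simp
qed

lemma ff_nonneg: "x \<in> {A..B} \<Longrightarrow> 0 \<le> ff x"
  unfolding ff_def by simp

lemma ff_ge1: "x \<in> {A<..<B} \<Longrightarrow> 1 \<le> ff x"
proof -
  assume x: "x \<in> {A<..<B}"
  then have "1 \<le> x - A" "1 \<le> B - x" by auto
  then have "1 * 1 \<le> (x - A) * (B - x)" by (intro mult_mono) auto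
  then show ?thesis unfolding ff_def by (metis of_int_1 of_int_le_iff mult_1)
qed

lemma ff_stepU:
  assumes V: "VV A B r"
  shows "(\<Sum>x\<in>{A..B}. ff x * U r (Suc n) x) \<le>
    (\<Sum>x\<in>{A..B}. ff x * U r n x) - (\<Sum>x\<in>{A<..<B}. U r n x)"
proof -
  have vr: "valid01 r" using V by (simp add: VV_def)
  have "(\<Sum>x\<in>{A..B}. ff x * U r (Suc n) x) = (\<Sum>y\<in>{A<..<B}. (1 - r y) * U r n y * (ff y - 1))"
    by (subst U_step[OF V]) (simp add: ff_step)
  also have "\<dots> \<le> (\<Sum>y\<in>{A<..<B}. U r n y * (ff y - 1))"
  proof (intro sum_mono)
    fix y assume y: "y \<in> {A<..<B}"
    have "0 \<le> U r n y * (ff y - 1)" using ff_ge1[OF y] U_nonneg[OF vr] by simp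
    moreover have "0 \<le> r y" "r y \<le> 1" using vr by (auto simp: valid01_def)
    ultimately show "(1 - r y) * U r n y * (ff y - 1) \<le> U r n y * (ff y - 1)"
      by (simp add: mult.assoc mult_left_le_one_le)
  qed
  also have "\<dots> = (\<Sum>y\<in>{A<..<B}. ff y * U r n y) - (\<Sum>y\<in>{A<..<B}. U r n y)"
    by (simp add: algebra_simps sum_subtractf)
  also have "(\<Sum>y\<in>{A<..<B}. ff y * U r n y) \<le> (\<Sum>y\<in>{A..B}. ff y * U r n y)"
    by (rule sum_mono2) (auto intro!: mult_nonneg_nonneg ff_nonneg U_nonneg vr)
  finally show ?thesis by simp
qed

lemma ff_total:
  assumes V: "VV A B r"
  shows "(\<Sum>x\<in>{A..B}. ff x * U r n x) + (\<Sum>k<n. \<Sum>x\<in>{A<..<B}. U r k x) \<le> - of_int (A * B)"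
proof (induction n)
  case 0
  have "(\<Sum>x\<in>{A..B}. ff x * U r 0 x) = ff 0" using A0 B0 by (simp add: U_0 if_distrib cong: if_cong)
  then show ?case by (simp add: ff_def)
next
  case (Suc n) then show ?case using ff_stepU[OF V, of n] by simp
qed

lemma visits_bound:
  assumes V: "VV A B r"
  shows "(\<Sum>k<n. \<Sum>x\<in>{A<..<B}. U r k x) \<le> - of_int (A * B)"
proof -
  have vr: "valid01 r" using V by (simp add: VV_def)
  have "0 \<le> (\<Sum>x\<in>{A..B}. ff x * U r n x)"
    by (intro sum_nonneg mult_nonneg_nonneg ff_nonneg U_nonneg vr) auto
  then show ?thesis using ff_total[OF V, of n] by linarith
qed

end


definition hh :: "(int \<Rightarrow> real) \<Rightarrow> int \<Rightarrow> real" where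
  "hh r i = (\<Sum>n. r i * U r n i)"

lemma wt_mono:
  assumes "valid01 r" "valid01 r'" "\<And>x. r x \<le> r' x"
  shows "wt r' p \<le> wt r p"
  unfolding wt_def using assms
  by (intro mult_left_mono prod_mono) (auto simp: valid01_def)

lemma U_mono:
  assumes "valid01 r" "valid01 r'" "\<And>x. r x \<le> r' x"
  shows "U r' n x \<le> U r n x"
  unfolding U_def using wt_mono[OF assms] by (intro sum_mono) auto

lemma wt_cont:
  assumes "\<And>x. (\<lambda>k. s k x) \<longlonglongrightarrow> r x"
  shows "(\<lambda>k. wt (s k) p) \<longlonglongrightarrow> wt r p"
  unfolding wt_def
  apply (rule tendsto_mult[OF tendsto_const])
  apply (rule tendsto_prod)
  apply (rule tendsto_diff[OF tendsto_const])
  apply (rule assms)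
  done

lemma rU_nonneg: "valid01 r \<Longrightarrow> 0 \<le> r x * U r n x"
proof -
  assume v: "valid01 r"
  have "0 \<le> r x" using v by (simp add: valid01_def)
  moreover have "0 \<le> U r n x" by (rule U_nonneg[OF v])
  ultimately show ?thesis by simp
qed

lemma U_cont:
  assumes "\<And>x. (\<lambda>k. s k x) \<longlonglongrightarrow> r x"
  shows "(\<lambda>k. U (s k) n x) \<longlonglongrightarrow> U r n x"
  unfolding U_def
proof (rule tendsto_sum)
  fix p show "(\<lambda>k. if wl p n = x then wt (s k) p else 0) \<longlonglongrightarrow> (if wl p n = x then wt r p else 0)"
    by (cases "wl p n = x") (auto intro: wt_cont assms)
qed

context
  fixes A B :: int
  assumes A0: "A < 0" and B0: "0 < B"
begin

lemma summable_int:
  assumes V: "VV A B r"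
  shows "summable (\<lambda>k. \<Sum>x\<in>{A<..<B}. U r k x)"
  using visits_bound[OF A0 B0 V] VV_valid[OF A0 B0 V]
  by (intro summableI_nonneg_bounded[where x="- of_int (A * B)"]) (auto intro!: sum_nonneg U_nonneg)

lemma U_int_summable:
  assumes V: "VV A B r" and i: "i \<in> {A<..<B}"
  shows "summable (\<lambda>k. U r k i)" "(\<Sum>k. U r k i) \<le> - of_int (A * B)" "0 \<le> (\<Sum>k. U r k i)"
proof -
  have vr: "valid01 r" using VV_valid[OF A0 B0 V] .
  have le: "U r k i \<le> (\<Sum>x\<in>{A<..<B}. U r k x)" for k
    using i by (intro member_le_sum) (auto intro: U_nonneg vr)
  show s: "summable (\<lambda>k. U r k i)"
    by (rule summable_comparison_test'[OF summable_int[OF V], of 0]) (simp add: U_nonneg[OF vr] le)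
  have "(\<Sum>k. U r k i) \<le> (\<Sum>k. \<Sum>x\<in>{A<..<B}. U r k x)"
    by (intro suminf_le le s summable_int V)
  also have "\<dots> \<le> - of_int (A * B)"
    using visits_bound[OF A0 B0 V] by (intro suminf_le_const summable_int V) auto
  finally show "(\<Sum>k. U r k i) \<le> - of_int (A * B)" .
  show "0 \<le> (\<Sum>k. U r k i)" using s by (intro suminf_nonneg U_nonneg vr)
qed

lemma tends0_S:
  assumes V: "VV A B r"
  shows "(\<lambda>k. \<Sum>x\<in>{A..B}. U r k x) \<longlonglongrightarrow> 0"
proof -
  have vr: "valid01 r" using VV_valid[OF A0 B0 V] .
  have t0: "(\<lambda>k. \<Sum>x\<in>{A<..<B}. U r k x) \<longlonglongrightarrow> 0"
    by (rule summable_LIMSEQ_zero[OF summable_int[OF V]])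
  have "(\<lambda>k. \<Sum>x\<in>{A..B}. U r (Suc k) x) \<longlonglongrightarrow> 0"
  proof (rule tendsto_sandwich[OF _ _ tendsto_const t0])
    show "\<forall>\<^sub>F k in sequentially. 0 \<le> (\<Sum>x\<in>{A..B}. U r (Suc k) x)"
      by (intro always_eventually allI sum_nonneg U_nonneg vr)
    show "\<forall>\<^sub>F k in sequentially. (\<Sum>x\<in>{A..B}. U r (Suc k) x) \<le> (\<Sum>x\<in>{A<..<B}. U r k x)"
    proof (intro always_eventually allI)
      fix k
      have "(\<Sum>x\<in>{A..B}. U r (Suc k) x) = (\<Sum>y\<in>{A<..<B}. (1 - r y) * U r k y)"
        using U_step[OF A0 B0 V, of "\<lambda>_. 1" k] by simp
      also have "\<dots> \<le> (\<Sum>y\<in>{A<..<B}. U r k y)"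
        using vr by (intro sum_mono) (auto simp: valid01_def intro!: mult_left_le_one_le U_nonneg)
      finally show "(\<Sum>x\<in>{A..B}. U r (Suc k) x) \<le> (\<Sum>x\<in>{A<..<B}. U r k x)" .
    qed
  qed
  then show ?thesis by (rule filterlim_sequentially_Suc[THEN iffD1])
qed

lemma mass_sums:
  assumes V: "VV A B r"
  shows "(\<lambda>k. \<Sum>x\<in>{A..B}. r x * U r k x) sums 1"
proof -
  have "(\<lambda>n. 1 - (\<Sum>x\<in>{A..B}. U r n x)) \<longlonglongrightarrow> 1 - 0"
    by (intro tendsto_intros tends0_S V)
  moreover have "1 - (\<Sum>x\<in>{A..B}. U r n x) = (\<Sum>k<n. \<Sum>x\<in>{A..B}. r x * U r k x)" for n
    using mass_total[OF A0 B0 V, of n] by simp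
  ultimately show ?thesis unfolding sums_def by simp
qed

lemma mean_sums:
  assumes V: "VV A B r"
  shows "(\<lambda>k. \<Sum>x\<in>{A..B}. of_int x * (r x * U r k x)) sums 0"
proof -
  have vr: "valid01 r" using VV_valid[OF A0 B0 V] .
  have "(\<lambda>n. (\<Sum>x\<in>{A..B}. of_int x * U r n x)) \<longlonglongrightarrow> 0"
  proof (rule tendsto_0_le[OF tends0_S[OF V], where K="of_int (B - A)"])
    show "\<forall>\<^sub>F n in sequentially. norm (\<Sum>x\<in>{A..B}. of_int x * U r n x) \<le> norm (\<Sum>x\<in>{A..B}. U r n x) * of_int (B - A)"
    proof (intro always_eventually allI)
      fix n
      have "norm (\<Sum>x\<in>{A..B}. of_int x * U r n x) \<le> (\<Sum>x\<in>{A..B}. norm (of_int x * U r n x))"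
        by (rule norm_sum)
      also have "\<dots> \<le> (\<Sum>x\<in>{A..B}. of_int (B - A) * U r n x)"
      proof (intro sum_mono)
        fix x assume x: "x \<in> {A..B}"
        then have "\<bar>x\<bar> \<le> B - A" using A0 B0 by auto
        then have "\<bar>real_of_int x\<bar> \<le> of_int (B - A)" by linarith
        then show "norm (of_int x * U r n x) \<le> of_int (B - A) * U r n x"
          using U_nonneg[OF vr, of n x] by (simp add: abs_mult mult_right_mono)
      qed
      also have "\<dots> = norm (\<Sum>x\<in>{A..B}. U r n x) * of_int (B - A)"
        using U_nonneg[OF vr] by (simp add: sum_distrib_left sum_nonneg mult.commute)
      finally show "norm (\<Sum>x\<in>{A..B}. of_int x * U r n x) \<le> norm (\<Sum>x\<in>{A..B}. U r n x) * of_int (B - A)" .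
    qed
  qed
  then have "(\<lambda>n. - (\<Sum>x\<in>{A..B}. of_int x * U r n x)) \<longlonglongrightarrow> - 0"
    by (intro tendsto_intros)
  moreover have "- (\<Sum>x\<in>{A..B}. of_int x * U r n x) = (\<Sum>k<n. \<Sum>x\<in>{A..B}. of_int x * (r x * U r k x))" for n
    using mean_total[OF A0 B0 V, of n] by simp
  ultimately show ?thesis unfolding sums_def by simp
qed

lemma summable_rU:
  assumes V: "VV A B r"
  shows "summable (\<lambda>n. r i * U r n i)"
proof (cases "i \<in> {A..B}")
  case True
  have vr: "valid01 r" using VV_valid[OF A0 B0 V] .
  show ?thesis
  proof (rule summable_comparison_test'[OF sums_summable[OF mass_sums[OF V]], of 0])
    fix n
    have "0 \<le> r i" "0 \<le> U r n i" using vr U_nonneg[OF vr] by (auto simp: valid01_def)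
    then have "0 \<le> r i * U r n i" by simp
    moreover have "r i * U r n i \<le> (\<Sum>x\<in>{A..B}. r x * U r n x)"
      using True by (intro member_le_sum rU_nonneg vr) auto
    ultimately show "norm (r i * U r n i) \<le> (\<Sum>x\<in>{A..B}. r x * U r n x)" by simp
  qed
next
  case False then show ?thesis by (simp add: U_out[OF A0 B0 V])
qed

lemma hh_out: "VV A B r \<Longrightarrow> i \<notin> {A..B} \<Longrightarrow> hh r i = 0"
  by (simp add: hh_def U_out[OF A0 B0])

lemma hh_total:
  assumes V: "VV A B r" shows "(\<Sum>i\<in>{A..B}. hh r i) = 1"
proof -
  have "(\<Sum>i\<in>{A..B}. hh r i) = (\<Sum>n. \<Sum>i\<in>{A..B}. r i * U r n i)"
    unfolding hh_def by (rule suminf_sum[symmetric]) (rule summable_rU[OF V])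
  also have "\<dots> = 1" by (rule sums_unique[OF mass_sums[OF V], symmetric])
  finally show ?thesis .
qed

lemma hh_mean:
  assumes V: "VV A B r" shows "(\<Sum>i\<in>{A..B}. of_int i * hh r i) = 0"
proof -
  have "(\<Sum>i\<in>{A..B}. of_int i * hh r i) = (\<Sum>i\<in>{A..B}. \<Sum>n. of_int i * (r i * U r n i))"
    unfolding hh_def by (intro sum.cong refl suminf_mult[symmetric] summable_rU[OF V])
  also have "\<dots> = (\<Sum>n. \<Sum>i\<in>{A..B}. of_int i * (r i * U r n i))"
    by (rule suminf_sum[symmetric]) (intro summable_mult summable_rU[OF V])
  also have "\<dots> = 0" by (rule sums_unique[OF mean_sums[OF V], symmetric])
  finally show ?thesis .
qed

lemma hh_int: "VV A B r \<Longrightarrow> i \<in> {A<..<B} \<Longrightarrow> hh r i = r i * (\<Sum>n. U r n i)"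
  unfolding hh_def by (intro suminf_mult U_int_summable)

lemma hh_nonneg:
  assumes V: "VV A B r" shows "0 \<le> hh r i"
proof -
  have vr: "valid01 r" using VV_valid[OF A0 B0 V] .
  have "0 \<le> r i * U r n i" for n
    using vr U_nonneg[OF vr, of n i] by (auto simp: valid01_def)
  then show ?thesis unfolding hh_def by (intro suminf_nonneg summable_rU V)
qed

lemma hh_mono:
  assumes V: "VV A B r" and V': "VV A B r'" and le: "\<And>x. r x \<le> r' x" and eq: "r i = r' i"
    and i: "i \<in> {A<..<B}"
  shows "hh r' i \<le> hh r i"
proof -
  have vr: "valid01 r" "valid01 r'" using VV_valid[OF A0 B0] V V' by auto
  have "(\<Sum>n. U r' n i) \<le> (\<Sum>n. U r n i)"
    by (intro suminf_le U_mono vr le U_int_summable V V' i)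
  then show ?thesis
    using vr eq by (simp add: hh_int[OF V i] hh_int[OF V' i] valid01_def mult_left_mono)
qed

lemma hh_pert:
  assumes V: "VV A B r" and V': "VV A B r'" and le: "\<And>x. r x \<le> r' x" and e: "r' i \<le> r i + \<epsilon>"
    and i: "i \<in> {A<..<B}"
  shows "hh r' i \<le> hh r i + \<epsilon> * (- of_int (A * B))"
proof -
  have vr: "valid01 r" "valid01 r'" using VV_valid[OF A0 B0] V V' by auto
  have e0: "0 \<le> \<epsilon>" using le[of i] e by simp
  have s1: "(\<Sum>n. U r' n i) \<le> (\<Sum>n. U r n i)"
    by (intro suminf_le U_mono vr le U_int_summable V V' i)
  have "hh r' i = r' i * (\<Sum>n. U r' n i)" by (rule hh_int[OF V' i])
  also have "\<dots> \<le> (r i + \<epsilon>) * (\<Sum>n. U r n i)"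
    using vr s1 e e0 U_int_summable(3)[OF V' i] U_int_summable(3)[OF V i]
    by (intro mult_mono) (auto simp: valid01_def intro: add_nonneg_nonneg)
  also have "\<dots> = hh r i + \<epsilon> * (\<Sum>n. U r n i)" by (simp add: hh_int[OF V i] algebra_simps)
  also have "\<dots> \<le> hh r i + \<epsilon> * (- of_int (A * B))"
    using mult_left_mono[OF U_int_summable(2)[OF V i] e0] by simp
  finally show ?thesis .
qed

lemma hh_fatou:
  assumes V: "\<And>k. VV A B (s k)" and Vr: "VV A B r" and lim: "\<And>x. (\<lambda>k. s k x) \<longlonglongrightarrow> r x"
    and c: "\<And>k. hh (s k) i \<le> c"
  shows "hh r i \<le> c"
  unfolding hh_def
proof (rule suminf_le_const[OF summable_rU[OF Vr]])
  fix N
  have "(\<lambda>k. \<Sum>n<N. s k i * U (s k) n i) \<longlonglongrightarrow> (\<Sum>n<N. r i * U r n i)"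
    by (intro tendsto_intros lim U_cont)
  moreover have "(\<Sum>n<N. s k i * U (s k) n i) \<le> c" for k
  proof -
    have vr: "valid01 (s k)" using VV_valid[OF A0 B0 V] .
    have "0 \<le> s k i * U (s k) n i" for n
      using vr U_nonneg[OF vr, of n i] by (auto simp: valid01_def)
    then have "(\<Sum>n<N. s k i * U (s k) n i) \<le> hh (s k) i"
      unfolding hh_def by (intro sum_le_suminf summable_rU V) auto
    then show ?thesis using c[of k] by simp
  qed
  ultimately show "(\<Sum>n<N. r i * U r n i) \<le> c"
    by (intro LIMSEQ_le_const2) auto
qed

lemma barrier_pos:
  assumes V: "VV A B r" and c: "0 < c" "r c = 1"
  shows "c < x \<Longrightarrow> U r n x = 0"
proof (induction n arbitrary: x)
  case 0 then show ?case using c by (simp add: U_0)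
next
  case (Suc n)
  have "(1 - r (x - 1)) * U r n (x - 1) = 0"
    using Suc c by (cases "x - 1 = c") auto
  then show ?case using Suc by (simp add: U_Suc)
qed

lemma barrier_neg:
  assumes V: "VV A B r" and c: "c < 0" "r c = 1"
  shows "x < c \<Longrightarrow> U r n x = 0"
proof (induction n arbitrary: x)
  case 0 then show ?case using c by (simp add: U_0)
next
  case (Suc n)
  have "(1 - r (x + 1)) * U r n (x + 1) = 0"
    using Suc c by (cases "x + 1 = c") auto
  then show ?case using Suc by (simp add: U_Suc)
qed

lemma hh_ge0: "VV A B r \<Longrightarrow> r 0 \<le> hh r 0"
proof -
  assume V: "VV A B r"
  have vr: "valid01 r" using VV_valid[OF A0 B0 V] .
  have "0 \<le> r 0 * U r n 0" for n
    using vr U_nonneg[OF vr, of n 0] by (auto simp: valid01_def)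
  then have "(\<Sum>n\<in>{0}. r 0 * U r n 0) \<le> hh r 0"
    unfolding hh_def by (intro sum_le_suminf summable_rU V) auto
  then show ?thesis by (simp add: U_0)
qed

end


lemma prob_model: "prob_space (model r)"
  unfolding model_def by (intro prob_space_pair prob_M1 prob_M2)

lemma tau_enat_iff: "tau \<omega> = enat n \<longleftrightarrow> (\<forall>t<n. xi \<omega> t (walk \<omega> t)) \<and> \<not> xi \<omega> n (walk \<omega> n)"
proof (cases "\<exists>t. \<not> xi \<omega> t (walk \<omega> t)")
  case True
  then have "tau \<omega> = enat (LEAST t. \<not> xi \<omega> t (walk \<omega> t))" by (simp add: tau_def)
  then show ?thesis
    by (metis (mono_tags, lifting) LeastI_ex enat.inject not_less_Least linorder_neqE_nat True Least_equality le_less)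
next
  case False
  then show ?thesis by (simp add: tau_def)
qed

lemma tau_inf_iff: "tau \<omega> = \<infinity> \<longleftrightarrow> (\<forall>t. xi \<omega> t (walk \<omega> t))"
  by (simp add: tau_def)

lemma tau_less: "enat s < tau \<omega> \<Longrightarrow> xi \<omega> s (walk \<omega> s)"
proof (cases "\<exists>t. \<not> xi \<omega> t (walk \<omega> t)")
  case True
  assume "enat s < tau \<omega>"
  then have "s < (LEAST t. \<not> xi \<omega> t (walk \<omega> t))" using True by (simp add: tau_def)
  then show ?thesis using not_less_Least by blast
next
  case False then show ?thesis by simp
qed

lemma tau_ge_iff: "enat t \<le> tau \<omega> \<longleftrightarrow> (\<forall>s<t. xi \<omega> s (walk \<omega> s))"
proof
  assume "enat t \<le> tau \<omega>"
  then show "\<forall>s<t. xi \<omega> s (walk \<omega> s)"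
    by (meson enat_ord_simps(2) order_less_le_trans tau_less)
next
  assume a: "\<forall>s<t. xi \<omega> s (walk \<omega> s)"
  show "enat t \<le> tau \<omega>"
  proof (cases "tau \<omega>")
    case (enat n)
    then have "\<not> xi \<omega> n (walk \<omega> n)" using tau_enat_iff by blast
    then have "\<not> n < t" using a by blast
    then show ?thesis using enat by simp
  qed simp
qed

lemma killev_disj: "n \<noteq> m \<Longrightarrow> killev n i \<inter> killev m i = {}"
  unfolding killev_def by (auto dest: linorder_neqE_nat)

lemma hit_set: "{\<omega> \<in> space (model r). \<exists>n. tau \<omega> = enat n \<and> walk \<omega> n = i} = (\<Union>n. killev n i)"
  by (auto simp: killev_def tau_enat_iff)

lemma measure_killev:
  assumes "valid01 r"
  shows "measure (model r) (killev n x) = r x * U r n x"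
proof -
  have "0 \<le> r x * U r n x" by (rule rU_nonneg[OF assms])
  then show ?thesis using emeasure_killev[OF assms] by (simp add: measure_def)
qed

lemma hit_prob_eq:
  assumes "valid01 r"
  shows "hit_prob r i = hh r i"
proof -
  interpret P: prob_space "model r" by (rule prob_model)
  have "(\<lambda>n. measure (model r) (killev n i)) sums measure (model r) (\<Union>n. killev n i)"
    by (rule measure_UNION) (auto simp: disjoint_family_on_def killev_disj P.emeasure_finite)
  then have "(\<lambda>n. r i * U r n i) sums hit_prob r i"
    unfolding hit_prob_def hit_set measure_killev[OF assms] .
  then show ?thesis unfolding hh_def by (rule sums_unique)
qed

lemma pred_coin[measurable]: "Measurable.pred (model r) (\<lambda>\<omega>. fst \<omega> u)"
  unfolding model_def by measurable

lemma pred_xi[measurable]: "Measurable.pred (model r) (\<lambda>\<omega>. snd \<omega> j)"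
proof -
  have "(\<lambda>\<xi>. \<xi> j) \<in> measurable (M2 r) ((\<lambda>(t, x). measure_pmf (bernoulli_pmf (1 - r x))) j)"
    by (rule measurable_component_singleton) simp
  then have "(\<lambda>\<xi>. \<xi> j) \<in> measurable (M2 r) (count_space UNIV)"
    by (cases j) (simp add: measurable_cong_sets[OF refl sets_measure_pmf_count_space])
  then show ?thesis unfolding model_def by (rule measurable_compose[OF measurable_snd])
qed

lemma walk_set_eq: "{\<omega>. walk \<omega> i = a} = (\<Union>p\<in>{p\<in>Ls i. wl p i = a}. Cyl p \<times> UNIV)"
proof (intro set_eqI iffI)
  fix \<omega> :: sample assume a: "\<omega> \<in> {\<omega>. walk \<omega> i = a}"
  have "walk \<omega> i = wl (map (fst \<omega>) [0..<i]) i" by (intro walk_wl) auto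
  then show "\<omega> \<in> (\<Union>p\<in>{p\<in>Ls i. wl p i = a}. Cyl p \<times> UNIV)"
    using a pref_Ls[of "fst \<omega>" i] pref_Cyl[of "fst \<omega>" i]
    by (auto intro!: bexI[of _ "map (fst \<omega>) [0..<i]"] simp: mem_Times_iff)
next
  fix \<omega> :: sample assume "\<omega> \<in> (\<Union>p\<in>{p\<in>Ls i. wl p i = a}. Cyl p \<times> UNIV)"
  then obtain p where p: "p \<in> Ls i" "wl p i = a" "fst \<omega> \<in> Cyl p" by auto
  have "walk \<omega> i = wl p i" using p by (intro walk_wl) (auto simp: Cyl_def Ls_def)
  then show "\<omega> \<in> {\<omega>. walk \<omega> i = a}" using p by simp
qed

lemma walk_meas[measurable]: "(\<lambda>\<omega>. walk \<omega> i) \<in> measurable (model r) (count_space UNIV)"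
proof -
  have "{\<omega>. walk \<omega> i = a} \<in> sets (model r)" for a
  proof -
    have U: "UNIV \<in> sets (M2 r)" using sets.top[of "M2 r"] by simp
    show ?thesis
      unfolding walk_set_eq model_def by (intro sets.finite_UN ballI pair_measureI sets_Cyl U) auto
  qed
  moreover have "(\<lambda>\<omega>. walk \<omega> i) -` {a} \<inter> space (model r) = {\<omega>. walk \<omega> i = a}" for a by auto
  ultimately show ?thesis by (auto simp: measurable_count_space_eq2_countable)
qed

lemma walk_Suc: "walk \<omega> (Suc s) = walk \<omega> s + (if fst \<omega> s then 1 else -1)"
  by (simp add: walk_def)

lemma stopping: "stopping_time_enat (filt r) tau"
  unfolding stopping_time_enat_def
proof
  fix t :: nat
  define f where "f \<omega> = restrict (\<lambda>u. (walk \<omega> u, xi \<omega> u (walk \<omega> u))) {..t}" for \<omega>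
  have tle: "(tau \<omega> \<le> enat t) = (\<exists>u\<in>{..t}. \<not> snd (f \<omega> u))" for \<omega>
  proof -
    have "(tau \<omega> \<le> enat t) \<longleftrightarrow> \<not> enat (Suc t) \<le> tau \<omega>" by (simp add: Suc_ile_eq not_less)
    also have "\<dots> \<longleftrightarrow> (\<exists>u\<in>{..t}. \<not> snd (f \<omega> u))"
      unfolding tau_ge_iff f_def by (auto simp: less_Suc_eq_le)
    finally show ?thesis .
  qed
  have fm: "f \<in> measurable (filt r t) (PiM {..t} (\<lambda>_. count_space (UNIV :: (int \<times> bool) set)))"
    unfolding filt_def f_def by (rule measurable_vimage_algebra1) (auto simp: space_PiM)
  have c: "Measurable.pred (PiM {..t} (\<lambda>_. count_space (UNIV :: (int \<times> bool) set))) (\<lambda>g. \<not> snd (g u))"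
    if "u \<in> {..t}" for u
  proof -
    have "(\<lambda>g. g u) \<in> measurable (PiM {..t} (\<lambda>_. count_space (UNIV :: (int \<times> bool) set))) (count_space UNIV)"
      by (rule measurable_component_singleton) (use that in simp)
    then show ?thesis by (rule measurable_compose) simp
  qed
  have P: "Measurable.pred (PiM {..t} (\<lambda>_. count_space (UNIV :: (int \<times> bool) set))) (\<lambda>g. \<exists>u\<in>{..t}. \<not> snd (g u))"
    by (rule pred_intros_finite(4)) (auto intro: c)
  have "Measurable.pred (filt r t) (\<lambda>\<omega>. \<exists>u\<in>{..t}. \<not> snd (f \<omega> u))"
    using measurable_compose[OF fm P] by (simp add: comp_def)
  then show "Measurable.pred (filt r t) (\<lambda>\<omega>. tau \<omega> \<le> enat t)"
    by (simp add: tle)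
qed

lemma pred_tau_eq[measurable]: "Measurable.pred (model r) (\<lambda>\<omega>. tau \<omega> = enat m)"
  unfolding tau_enat_iff xi_def by measurable

lemma pred_tau_ge[measurable]: "Measurable.pred (model r) (\<lambda>\<omega>. enat m \<le> tau \<omega>)"
  unfolding tau_ge_iff xi_def by measurable

definition stidx :: "nat \<Rightarrow> sample \<Rightarrow> nat" where
  "stidx t \<omega> = (case tau \<omega> of enat n \<Rightarrow> min t n | \<infinity> \<Rightarrow> t)"

lemma stidx_iff: "stidx t \<omega> = m \<longleftrightarrow> (m < t \<and> tau \<omega> = enat m) \<or> (m = t \<and> enat t \<le> tau \<omega>)"
  by (cases "tau \<omega>") (auto simp: stidx_def min_def)

lemma stidx_meas[measurable]: "stidx t \<in> measurable (model r) (count_space UNIV)"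
proof -
  have "stidx t -` {m} \<inter> space (model r) = {\<omega>\<in>space (model r). (m < t \<and> tau \<omega> = enat m) \<or> (m = t \<and> enat t \<le> tau \<omega>)}" for m
    by (rule set_eqI) (simp add: stidx_iff)
  moreover have "{\<omega>\<in>space (model r). (m < t \<and> tau \<omega> = enat m) \<or> (m = t \<and> enat t \<le> tau \<omega>)} \<in> sets (model r)" for m
    by measurable
  ultimately show ?thesis by (auto simp: measurable_count_space_eq2_countable)
qed

lemma stopped_stidx: "stopped \<omega> t = walk \<omega> (stidx t \<omega>)"
  by (simp add: stopped_def stidx_def)

lemma stopped_meas: "(\<lambda>\<omega>. real_of_int (stopped \<omega> t)) \<in> borel_measurable (model r)"
proof -
  have "(\<lambda>\<omega>. real_of_int (walk \<omega> i)) \<in> borel_measurable (model r)" for i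
    by (rule measurable_compose[OF walk_meas]) simp
  then have "(\<lambda>\<omega>. real_of_int (walk \<omega> (stidx t \<omega>))) \<in> borel_measurable (model r)"
    by (rule measurable_compose_countable[OF _ stidx_meas])
  then show ?thesis by (simp add: stopped_stidx)
qed

lemma stidx_le: "enat (stidx t \<omega>) \<le> tau \<omega>"
  by (cases "tau \<omega>") (auto simp: stidx_def)

context
  fixes A B :: int
  assumes A0: "A < 0" and B0: "0 < B"
begin

lemma wt_zero_out:
  assumes V: "VV A B r" and p: "p \<in> Ls n" and out: "wl p n \<notin> {A..B}"
  shows "wt r p = 0"
proof (cases n)
  case 0 then show ?thesis using out A0 B0 by simp
next
  case (Suc m)
  have "wl p m \<notin> {A<..<B}" using out by (auto simp: Suc wl_Suc split: if_splits)
  then have "1 - r (wl p m) = 0" using VV_out[OF A0 B0 V] by simp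
  then have "(\<Prod>t<length p. 1 - r (wl p t)) = 0"
    using p by (intro prod_zero) (auto simp: Suc Ls_def intro!: bexI[of _ m])
  then show ?thesis by (simp add: wt_def)
qed

lemma alive_mass:
  assumes V: "VV A B r"
  shows "(\<Sum>p\<in>Ls n. wt r p) = (\<Sum>x\<in>{A..B}. U r n x)"
proof -
  have "(\<Sum>x\<in>{A..B}. U r n x) = (\<Sum>p\<in>Ls n. \<Sum>x\<in>{A..B}. if wl p n = x then wt r p else 0)"
    unfolding U_def by (rule sum.swap)
  also have "\<dots> = (\<Sum>p\<in>Ls n. if wl p n \<in> {A..B} then wt r p else 0)"
    by (intro sum.cong refl) (simp add: sum.delta)
  also have "\<dots> = (\<Sum>p\<in>Ls n. wt r p)"
    using wt_zero_out[OF V] by (intro sum.cong refl) auto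
  finally show ?thesis by simp
qed

lemma AE_finite:
  assumes V: "VV A B r"
  shows "AE \<omega> in model r. tau \<omega> \<noteq> \<infinity>"
proof (rule AE_I')
  have vr: "valid01 r" using VV_valid[OF A0 B0 V] .
  let ?N = "\<Inter>n. aliveev n"
  have Ns: "?N \<in> sets (model r)" by (intro sets.countable_INT) auto
  have le: "emeasure (model r) ?N \<le> ennreal (\<Sum>x\<in>{A..B}. U r n x)" for n
  proof -
    have "emeasure (model r) ?N \<le> emeasure (model r) (aliveev n)" by (intro emeasure_mono) auto
    then show ?thesis by (simp add: emeasure_aliveev[OF vr] alive_mass[OF V])
  qed
  have "(\<lambda>n. ennreal (\<Sum>x\<in>{A..B}. U r n x)) \<longlonglongrightarrow> ennreal 0"
    by (intro tendsto_ennrealI tends0_S[OF A0 B0 V])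
  then have "emeasure (model r) ?N \<le> 0"
    using le by (intro LIMSEQ_le_const[where X="\<lambda>n. ennreal (\<Sum>x\<in>{A..B}. U r n x)"]) auto
  then show "?N \<in> null_sets (model r)" using Ns by (simp add: null_sets_def)
  show "{\<omega> \<in> space (model r). \<not> tau \<omega> \<noteq> \<infinity>} \<subseteq> ?N"
    by (auto simp: tau_inf_iff aliveev_def)
qed

lemma AE_bdry:
  assumes V: "VV A B r"
  shows "AE \<omega> in model r. \<forall>t x. x \<notin> {A<..<B} \<longrightarrow> \<not> xi \<omega> t x"
proof -
  have "AE \<omega> in model r. x \<notin> {A<..<B} \<longrightarrow> \<not> xi \<omega> t x" for t x
  proof (cases "x \<in> {A<..<B}")
    case True then show ?thesis by simp
  next
    case False
    interpret P2: product_prob_space "\<lambda>(t, x). measure_pmf (bernoulli_pmf (1 - r x))" "UNIV :: (nat\<times>int) set"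
      by unfold_locales (auto simp: prob_space_measure_pmf split: prod.splits)
    have rx: "r x = 1" using VV_out[OF A0 B0 V False] .
    let ?D = "{y\<in>space (M2 r). y (t, x) \<in> {True}}"
    have Ds: "?D \<in> sets (M2 r)" by (rule sets_Collect_single) auto
    have "emeasure (M2 r) ?D = emeasure (measure_pmf (bernoulli_pmf (1 - r x))) {True}"
      by (subst P2.emeasure_PiM_Collect_single) auto
    also have "\<dots> = 0" by (simp add: emeasure_pmf_single rx)
    finally have D0: "emeasure (M2 r) ?D = 0" .
    have "emeasure (model r) (UNIV \<times> ?D) = emeasure M1 UNIV * emeasure (M2 r) ?D"
      unfolding model_def using sets.top[of M1] by (intro sigma_finite_measure.emeasure_pair_measure_Times[OF prob_space_imp_sigma_finite[OF prob_M2]] Ds) auto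
    then have "UNIV \<times> ?D \<in> null_sets (model r)"
      using D0 sets.top[of M1] Ds by (auto simp: null_sets_def model_def intro!: pair_measureI)
    then show ?thesis
      by (rule AE_I') (auto simp: xi_def)
  qed
  then show ?thesis by (simp add: AE_all_countable)
qed

lemma walk_bdd:
  assumes bd: "\<forall>t x. x \<notin> {A<..<B} \<longrightarrow> \<not> xi \<omega> t x"
  shows "enat s \<le> tau \<omega> \<Longrightarrow> walk \<omega> s \<in> {A..B}"
proof (induction s)
  case 0 then show ?case using A0 B0 by (simp add: walk_def)
next
  case (Suc s)
  then have "enat s < tau \<omega>" by (simp add: Suc_ile_eq)
  then have "xi \<omega> s (walk \<omega> s)" by (rule tau_less)
  then have "walk \<omega> s \<in> {A<..<B}" using bd by blast
  then show ?case by (auto simp: walk_Suc)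
qed

lemma UI:
  assumes V: "VV A B r"
  shows "uniformly_integrable (model r) (\<lambda>t \<omega>. real_of_int (stopped \<omega> t))"
  unfolding uniformly_integrable_def
proof (intro conjI allI stopped_meas tendsto_eventually)
  show "\<forall>\<^sub>F K in at_top. (SUP t. \<integral>\<^sup>+ \<omega>. ennreal \<bar>real_of_int (stopped \<omega> t)\<bar> *
      indicator {\<omega> \<in> space (model r). K < \<bar>real_of_int (stopped \<omega> t)\<bar>} \<omega> \<partial>model r) = 0"
    unfolding eventually_at_top_linorder
  proof (intro exI[of _ "of_int (B - A)"] allI impI)
    fix K :: real assume K: "of_int (B - A) \<le> K"
    have "(\<integral>\<^sup>+ \<omega>. ennreal \<bar>real_of_int (stopped \<omega> t)\<bar> *
      indicator {\<omega> \<in> space (model r). K < \<bar>real_of_int (stopped \<omega> t)\<bar>} \<omega> \<partial>model r) = (\<integral>\<^sup>+ \<omega>. 0 \<partial>model r)" for t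
    proof (rule nn_integral_cong_AE)
      show "AE \<omega> in model r. ennreal \<bar>real_of_int (stopped \<omega> t)\<bar> *
        indicator {\<omega> \<in> space (model r). K < \<bar>real_of_int (stopped \<omega> t)\<bar>} \<omega> = 0"
        using AE_bdry[OF V]
      proof eventually_elim
        case (elim \<omega>)
        have "stopped \<omega> t \<in> {A..B}"
          unfolding stopped_stidx by (rule walk_bdd[OF elim stidx_le])
        then have "\<bar>stopped \<omega> t\<bar> \<le> B - A" using A0 B0 by auto
        then have "\<bar>real_of_int (stopped \<omega> t)\<bar> \<le> K" using K by linarith
        then show ?case by (simp add: indicator_def)
      qed
    qed
    then show "(SUP t. \<integral>\<^sup>+ \<omega>. ennreal \<bar>real_of_int (stopped \<omega> t)\<bar> *
      indicator {\<omega> \<in> space (model r). K < \<bar>real_of_int (stopped \<omega> t)\<bar>} \<omega> \<partial>model r) = 0"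
      by simp
  qed
qed

end



context
  fixes A B :: int and \<mu> :: "int pmf"
  assumes A0: "A < 0" and B0: "0 < B"
    and PS: "measure_pmf.prob \<mu> {A..B} = 1"
    and EX0: "measure_pmf.expectation \<mu> real_of_int = 0"
    and PA: "pmf \<mu> A > 0" and PB: "pmf \<mu> B > 0"
begin

lemma R_iff: "r \<in> R_set A B \<mu> \<longleftrightarrow> VV A B r \<and> (\<forall>i\<in>{A<..<B}. hh r i \<le> pmf \<mu> i)"
proof
  assume r: "r \<in> R_set A B \<mu>"
  then have v: "valid01 r" by (simp add: R_set_def valid01_def)
  then show "VV A B r \<and> (\<forall>i\<in>{A<..<B}. hh r i \<le> pmf \<mu> i)"
    using r by (auto simp: R_set_def VV_def hit_prob_eq[OF v, symmetric])
next
  assume r: "VV A B r \<and> (\<forall>i\<in>{A<..<B}. hh r i \<le> pmf \<mu> i)"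
  then have v: "valid01 r" by (simp add: VV_def)
  then show "r \<in> R_set A B \<mu>"
    using r by (auto simp: R_set_def VV_def valid01_def hit_prob_eq[OF v])
qed

lemma S_fin: "finite {A..B}" by simp

lemma set_pmf_sub: "set_pmf \<mu> \<subseteq> {A..B}"
proof
  fix a assume a: "a \<in> set_pmf \<mu>"
  show "a \<in> {A..B}"
  proof (rule ccontr)
    assume na: "a \<notin> {A..B}"
    have "measure_pmf.prob \<mu> (insert a {A..B}) = pmf \<mu> a + (\<Sum>j\<in>{A..B}. pmf \<mu> j)"
      using na by (simp add: measure_measure_pmf_finite)
    also have "(\<Sum>j\<in>{A..B}. pmf \<mu> j) = 1" using PS by (simp add: measure_measure_pmf_finite)
    finally have "pmf \<mu> a + 1 \<le> 1" using measure_pmf.prob_le_1 by metis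
    moreover have "pmf \<mu> a > 0" using a by (simp add: set_pmf_eq')
    ultimately show False by simp
  qed
qed

lemma pmf_out: "i \<notin> {A..B} \<Longrightarrow> pmf \<mu> i = 0"
  using set_pmf_sub by (auto simp: pmf_eq_0_set_pmf)

lemma mu_total: "(\<Sum>j\<in>{A..B}. pmf \<mu> j) = 1"
  using PS by (simp add: measure_measure_pmf_finite)

lemma mu_mean: "(\<Sum>j\<in>{A..B}. of_int j * pmf \<mu> j) = 0"
proof -
  have "measure_pmf.expectation \<mu> real_of_int = (\<Sum>a\<in>{A..B}. pmf \<mu> a *\<^sub>R real_of_int a)"
    by (rule integral_measure_pmf[OF S_fin]) (use set_pmf_sub in auto)
  then show ?thesis using EX0 by (simp add: mult.commute)
qed

definition r0 :: "int \<Rightarrow> real" where "r0 x = (if x \<in> {A<..<B} then 0 else 1)"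

lemma VV_r0: "VV A B r0" by (simp add: VV_def valid01_def r0_def)

lemma r0_R: "r0 \<in> R_set A B \<mu>"
  unfolding R_iff
proof (intro conjI VV_r0 ballI)
  fix i assume i: "i \<in> {A<..<B}"
  have "hh r0 i = 0" using hh_int[OF A0 B0 VV_r0 i] i by (simp add: r0_def)
  then show "hh r0 i \<le> pmf \<mu> i" by simp
qed

lemma max_R:
  assumes r: "r \<in> R_set A B \<mu>" and r': "r' \<in> R_set A B \<mu>"
  shows "(\<lambda>x. max (r x) (r' x)) \<in> R_set A B \<mu>"
proof -
  have V: "VV A B r" "VV A B r'" and h: "\<forall>i\<in>{A<..<B}. hh r i \<le> pmf \<mu> i" "\<forall>i\<in>{A<..<B}. hh r' i \<le> pmf \<mu> i"
    using r r' by (auto simp: R_iff)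
  let ?m = "\<lambda>x. max (r x) (r' x)"
  have Vm: "VV A B ?m" using V by (auto simp: VV_def valid01_def le_max_iff_disj)
  show ?thesis unfolding R_iff
  proof (intro conjI Vm ballI)
    fix i assume i: "i \<in> {A<..<B}"
    show "hh ?m i \<le> pmf \<mu> i"
    proof (cases "r' i \<le> r i")
      case True
      then have "hh ?m i \<le> hh r i" by (intro hh_mono[OF A0 B0 V(1) Vm _ _ i]) auto
      then show ?thesis using h i by fastforce
    next
      case False
      then have "hh ?m i \<le> hh r' i" by (intro hh_mono[OF A0 B0 V(2) Vm _ _ i]) auto
      then show ?thesis using h i by fastforce
    qed
  qed
qed

lemma fin_R:
  assumes "finite F"
  shows "(\<forall>x\<in>F. g x \<in> R_set A B \<mu>) \<Longrightarrow> \<exists>s\<in>R_set A B \<mu>. \<forall>x\<in>F. g x x \<le> s x"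
  using assms
proof (induction F rule: finite_induct)
  case empty then show ?case using r0_R by blast
next
  case (insert x F)
  then obtain s where s: "s \<in> R_set A B \<mu>" "\<forall>y\<in>F. g y y \<le> s y" by auto
  have "(\<lambda>z. max (g x z) (s z)) \<in> R_set A B \<mu>" using max_R insert s by auto
  then show ?case using s by (intro bexI[of _ "\<lambda>z. max (g x z) (s z)"]) auto
qed

definition rmax :: "int \<Rightarrow> real" where "rmax x = (SUP r\<in>R_set A B \<mu>. r x)"

lemma R_ne: "R_set A B \<mu> \<noteq> {}" using r0_R by blast

lemma R_le1: "r \<in> R_set A B \<mu> \<Longrightarrow> r x \<le> 1 \<and> 0 \<le> r x"
  by (auto simp: R_iff VV_def valid01_def)

lemma bdd: "bdd_above ((\<lambda>r. r x) ` R_set A B \<mu>)"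
  using R_le1 by (intro bdd_aboveI[of _ 1]) auto

lemma rmax_upper: "r \<in> R_set A B \<mu> \<Longrightarrow> r x \<le> rmax x"
  unfolding rmax_def by (rule cSUP_upper[OF _ bdd])

lemma rmax_le1: "rmax x \<le> 1"
  unfolding rmax_def using R_le1 by (intro cSUP_least[OF R_ne]) auto

lemma rmax_nonneg: "0 \<le> rmax x"
  using rmax_upper[OF r0_R, of x] by (simp add: r0_def split: if_splits)

lemma rmax_out: "x \<notin> {A<..<B} \<Longrightarrow> rmax x = 1"
  using rmax_upper[OF r0_R, of x] rmax_le1[of x] by (auto simp: r0_def)

lemma VV_rmax: "VV A B rmax"
  by (simp add: VV_def valid01_def rmax_nonneg rmax_le1 rmax_out)

lemma approx_k: "\<exists>s\<in>R_set A B \<mu>. \<forall>x\<in>{A<..<B}. rmax x - inverse (real (Suc k)) < s x"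
proof -
  have "\<forall>x\<in>{A<..<B}. \<exists>r\<in>R_set A B \<mu>. rmax x - inverse (real (Suc k)) < r x"
  proof
    fix x
    have "rmax x - inverse (real (Suc k)) < rmax x" by simp
    then show "\<exists>r\<in>R_set A B \<mu>. rmax x - inverse (real (Suc k)) < r x"
      unfolding rmax_def by (subst (asm) less_cSUP_iff[OF R_ne bdd]) auto
  qed
  then obtain g where g: "\<forall>x\<in>{A<..<B}. g x \<in> R_set A B \<mu> \<and> rmax x - inverse (real (Suc k)) < g x x"
    by metis
  then obtain s where s: "s \<in> R_set A B \<mu>" "\<forall>x\<in>{A<..<B}. g x x \<le> s x"
    using fin_R[of "{A<..<B}" g] by auto
  show ?thesis using g s by (intro bexI[OF _ s(1)]) fastforce
qed

lemma rmax_R: "rmax \<in> R_set A B \<mu>"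
proof -
  obtain s where s: "\<forall>k. s k \<in> R_set A B \<mu> \<and> (\<forall>x\<in>{A<..<B}. rmax x - inverse (real (Suc k)) < s k x)"
    using approx_k by metis
  have V: "VV A B (s k)" for k using s by (simp add: R_iff)
  have lim: "(\<lambda>k. s k x) \<longlonglongrightarrow> rmax x" for x
  proof (cases "x \<in> {A<..<B}")
    case True
    have lo: "(\<lambda>k. rmax x - inverse (real (Suc k))) \<longlonglongrightarrow> rmax x"
      using tendsto_diff[OF tendsto_const LIMSEQ_inverse_real_of_nat, of "rmax x"] by simp
    show ?thesis
    proof (rule tendsto_sandwich[OF _ _ lo tendsto_const])
      show "\<forall>\<^sub>F k in sequentially. rmax x - inverse (real (Suc k)) \<le> s k x"
        using s True by (intro always_eventually allI less_imp_le) blast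
      show "\<forall>\<^sub>F k in sequentially. s k x \<le> rmax x"
        using s by (intro always_eventually allI rmax_upper) blast
    qed
  next
    case False
    then have "s k x = 1" for k using V[of k] by (simp add: VV_def)
    then show ?thesis using False by (simp add: rmax_out)
  qed
  show ?thesis unfolding R_iff
  proof (intro conjI VV_rmax ballI)
    fix i assume i: "i \<in> {A<..<B}"
    show "hh rmax i \<le> pmf \<mu> i"
      by (rule hh_fatou[OF A0 B0 V VV_rmax lim]) (use s i in \<open>auto simp: R_iff\<close>)
  qed
qed

lemma nu_le: "i \<in> {A<..<B} \<Longrightarrow> hh rmax i \<le> pmf \<mu> i"
  using rmax_R by (simp add: R_iff)

lemma AB_pos: "0 < - real_of_int (A * B)"
proof -
  have "A * B < 0" using A0 B0 by (simp add: mult_neg_pos)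
  then show ?thesis by (simp only: neg_0_less_iff_less of_int_less_0_iff)
qed

lemma eq_int:
  assumes i: "i \<in> {A<..<B}" and lt: "rmax i < 1"
  shows "hh rmax i = pmf \<mu> i"
proof (rule ccontr)
  assume "hh rmax i \<noteq> pmf \<mu> i"
  then have lt2: "hh rmax i < pmf \<mu> i" using nu_le[OF i] by simp
  define \<epsilon> where "\<epsilon> = min (1 - rmax i) ((pmf \<mu> i - hh rmax i) / (- real_of_int (A * B)))"
  have q0: "0 < (pmf \<mu> i - hh rmax i) / (- real_of_int (A * B))"
    using lt2 AB_pos by (intro divide_pos_pos) auto
  have e0: "0 < \<epsilon>" unfolding \<epsilon>_def using lt q0 by (simp only: min_less_iff_conj) simp
  have e1: "\<epsilon> \<le> 1 - rmax i" unfolding \<epsilon>_def by (rule min.cobounded1)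
  have e2: "\<epsilon> * (- real_of_int (A * B)) \<le> pmf \<mu> i - hh rmax i"
  proof -
    have "\<epsilon> \<le> (pmf \<mu> i - hh rmax i) / (- real_of_int (A * B))"
      unfolding \<epsilon>_def by (rule min.cobounded2)
    then show ?thesis by (simp only: pos_le_divide_eq[OF AB_pos])
  qed
  define r' where "r' = rmax(i := rmax i + \<epsilon>)"
  have le': "rmax x \<le> r' x" for x using e0 by (simp add: r'_def)
  have Vr': "VV A B r'"
    using VV_rmax e0 e1 i unfolding VV_def valid01_def r'_def
    by (auto simp: rmax_nonneg)
  have "r' \<in> R_set A B \<mu>"
    unfolding R_iff
  proof (intro conjI Vr' ballI)
    fix j assume j: "j \<in> {A<..<B}"
    show "hh r' j \<le> pmf \<mu> j"
    proof (cases "j = i")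
      case True
      have "hh r' i \<le> hh rmax i + \<epsilon> * (- real_of_int (A * B))"
        by (rule hh_pert[OF A0 B0 VV_rmax Vr' le' _ i]) (simp add: r'_def)
      then show ?thesis using e2 True by simp
    next
      case False
      have "hh r' j \<le> hh rmax j"
        by (rule hh_mono[OF A0 B0 VV_rmax Vr' le' _ j]) (simp add: r'_def False)
      then show ?thesis using nu_le[OF j] by simp
    qed
  qed
  then have "r' i \<le> rmax i" by (rule rmax_upper)
  then show False using e0 by (simp add: r'_def)
qed

lemma rmax0: "rmax 0 < 1"
proof (rule ccontr)
  assume "\<not> rmax 0 < 1"
  then have r1: "rmax 0 = 1" using rmax_le1[of 0] by simp
  have i0: "(0::int) \<in> {A<..<B}" using A0 B0 by simp
  have "1 \<le> hh rmax 0" using hh_ge0[OF A0 B0 VV_rmax] r1 by simp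
  then have "1 \<le> pmf \<mu> 0" using nu_le[OF i0] by simp
  moreover have "measure_pmf.prob \<mu> {0, A} = pmf \<mu> 0 + pmf \<mu> A"
    using A0 by (simp add: measure_measure_pmf_finite)
  moreover have "measure_pmf.prob \<mu> {0, A} \<le> 1" by (rule measure_pmf.prob_le_1)
  ultimately show False using PA by simp
qed

lemma sums_identity:
  "(\<Sum>j\<in>{A..B}. of_int j * (pmf \<mu> j - hh rmax j)) = 0"
  "(\<Sum>j\<in>{A..B}. (pmf \<mu> j - hh rmax j)) = 0"
proof -
  have t: "(\<Sum>j\<in>{A..B}. hh rmax j) = 1" by (rule hh_total[OF A0 B0 VV_rmax])
  have m: "(\<Sum>j\<in>{A..B}. of_int j * hh rmax j) = 0" by (rule hh_mean[OF A0 B0 VV_rmax])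
  show "(\<Sum>j\<in>{A..B}. of_int j * (pmf \<mu> j - hh rmax j)) = 0"
    using m mu_mean by (simp add: right_diff_distrib sum_subtractf)
  show "(\<Sum>j\<in>{A..B}. (pmf \<mu> j - hh rmax j)) = 0"
    using t mu_total by (simp add: sum_subtractf)
qed

lemma no_pos_barrier:
  assumes c: "0 < c" "c < B" "rmax c = 1"
  shows False
proof -
  have hB: "hh rmax B = 0"
    unfolding hh_def using barrier_pos[OF A0 B0 VV_rmax c(1) c(3)] c(2) by simp
  let ?f = "\<lambda>j. (of_int j - of_int A) * (pmf \<mu> j - hh rmax j)"
  have "(\<Sum>j\<in>{A..B}. ?f j) = (\<Sum>j\<in>{A..B}. of_int j * (pmf \<mu> j - hh rmax j)) - (\<Sum>j\<in>{A..B}. of_int A * (pmf \<mu> j - hh rmax j))"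
    by (simp only: left_diff_distrib sum_subtractf)
  also have "(\<Sum>j\<in>{A..B}. of_int A * (pmf \<mu> j - hh rmax j)) = of_int A * (\<Sum>j\<in>{A..B}. (pmf \<mu> j - hh rmax j))"
    by (rule sum_distrib_left[symmetric])
  finally have s1: "(\<Sum>j\<in>{A..B}. ?f j) = (\<Sum>j\<in>{A..B}. of_int j * (pmf \<mu> j - hh rmax j)) - of_int A * (\<Sum>j\<in>{A..B}. (pmf \<mu> j - hh rmax j))" .
  have s0: "(\<Sum>j\<in>{A..B}. ?f j) = 0" unfolding s1 by (simp only: sums_identity mult_zero_right diff_zero diff_self)
  have nn: "\<forall>j\<in>{A..B}. 0 \<le> ?f j"
  proof
    fix j assume j: "j \<in> {A..B}"
    consider "j = A" | "j = B" | "j \<in> {A<..<B}" using j by fastforce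
    then show "0 \<le> ?f j"
    proof cases
      case 1 then show ?thesis by simp
    next
      case 2 then show ?thesis using hB A0 B0 by simp
    next
      case 3 then show ?thesis using nu_le[OF 3] by (intro mult_nonneg_nonneg) auto
    qed
  qed
  have all0: "\<forall>j\<in>{A..B}. ?f j = 0"
    by (rule sum_nonneg_eq_0_iff[OF S_fin, THEN iffD1, OF _ s0]) (use nn in blast)
  have "B \<in> {A..B}" using A0 B0 by simp
  then have "?f B = 0" using all0 by blast
  then show False using hB A0 B0 PB by simp
qed

lemma no_neg_barrier:
  assumes c: "A < c" "c < 0" "rmax c = 1"
  shows False
proof -
  have hA: "hh rmax A = 0"
    unfolding hh_def using barrier_neg[OF A0 B0 VV_rmax c(2) c(3)] c(1) by simp
  let ?f = "\<lambda>j. (of_int B - of_int j) * (pmf \<mu> j - hh rmax j)"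
  have "(\<Sum>j\<in>{A..B}. ?f j) = (\<Sum>j\<in>{A..B}. of_int B * (pmf \<mu> j - hh rmax j)) - (\<Sum>j\<in>{A..B}. of_int j * (pmf \<mu> j - hh rmax j))"
    by (simp only: left_diff_distrib sum_subtractf)
  also have "(\<Sum>j\<in>{A..B}. of_int B * (pmf \<mu> j - hh rmax j)) = of_int B * (\<Sum>j\<in>{A..B}. (pmf \<mu> j - hh rmax j))"
    by (rule sum_distrib_left[symmetric])
  finally have s1: "(\<Sum>j\<in>{A..B}. ?f j) = of_int B * (\<Sum>j\<in>{A..B}. (pmf \<mu> j - hh rmax j)) - (\<Sum>j\<in>{A..B}. of_int j * (pmf \<mu> j - hh rmax j))" .
  have s0: "(\<Sum>j\<in>{A..B}. ?f j) = 0" unfolding s1 by (simp only: sums_identity mult_zero_right diff_zero diff_self)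
  have nn: "\<forall>j\<in>{A..B}. 0 \<le> ?f j"
  proof
    fix j assume j: "j \<in> {A..B}"
    consider "j = A" | "j = B" | "j \<in> {A<..<B}" using j by fastforce
    then show "0 \<le> ?f j"
    proof cases
      case 1 then show ?thesis using hA A0 B0 by simp
    next
      case 2 then show ?thesis by simp
    next
      case 3 then show ?thesis using nu_le[OF 3] by (intro mult_nonneg_nonneg) auto
    qed
  qed
  have all0: "\<forall>j\<in>{A..B}. ?f j = 0"
    by (rule sum_nonneg_eq_0_iff[OF S_fin, THEN iffD1, OF _ s0]) (use nn in blast)
  have "A \<in> {A..B}" using A0 B0 by simp
  then have "?f A = 0" using all0 by blast
  then show False using hA A0 B0 PA by simp
qed

lemma all_lt1: "i \<in> {A<..<B} \<Longrightarrow> rmax i < 1"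
proof -
  assume i: "i \<in> {A<..<B}"
  show "rmax i < 1"
  proof (rule ccontr)
    assume "\<not> rmax i < 1"
    then have r1: "rmax i = 1" using rmax_le1[of i] by simp
    consider "0 < i" | "i = 0" | "i < 0" by linarith
    then show False
    proof cases
      case 1 then show False using no_pos_barrier[of i] i r1 by simp
    next
      case 2 then show False using rmax0 r1 by simp
    next
      case 3 then show False using no_neg_barrier[of i] i r1 by simp
    qed
  qed
qed

lemma nu_eq_all: "hh rmax i = pmf \<mu> i"
proof -
  have int: "hh rmax j = pmf \<mu> j" if "j \<in> {A<..<B}" for j
    using eq_int[OF that all_lt1[OF that]] .
  have Sd: "{A..B} = insert A (insert B {A<..<B})" using A0 B0 by auto
  have nA: "A \<notin> insert B {A<..<B}" and nB: "B \<notin> {A<..<B}" using A0 B0 by auto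
  define a where "a = pmf \<mu> A - hh rmax A"
  define b where "b = pmf \<mu> B - hh rmax B"
  have zI: "(\<Sum>j\<in>{A<..<B}. pmf \<mu> j - hh rmax j) = 0"
    by (rule sum.neutral) (use int in simp)
  have zI2: "(\<Sum>j\<in>{A<..<B}. of_int j * (pmf \<mu> j - hh rmax j)) = 0"
    by (rule sum.neutral) (use int in simp)
  have "(\<Sum>j\<in>{A..B}. pmf \<mu> j - hh rmax j) = a + (b + (\<Sum>j\<in>{A<..<B}. pmf \<mu> j - hh rmax j))"
    unfolding Sd a_def b_def using nA nB by simp
  then have e1: "a + b = 0" using sums_identity(2) zI by simp
  have "(\<Sum>j\<in>{A..B}. of_int j * (pmf \<mu> j - hh rmax j)) = of_int A * a + (of_int B * b + (\<Sum>j\<in>{A<..<B}. of_int j * (pmf \<mu> j - hh rmax j)))"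
    unfolding Sd a_def b_def using nA nB by simp
  then have e2: "of_int A * a + of_int B * b = 0" using sums_identity(1) zI2 by simp
  have "(of_int B - of_int A) * b = of_int A * a + of_int B * b - of_int A * (a + b)"
    by (simp add: algebra_simps)
  also have "\<dots> = 0" using e1 e2 by simp
  finally have "(of_int B - of_int A) * b = 0" .
  moreover have "of_int B - of_int A \<noteq> (0::real)" using A0 B0 by simp
  ultimately have dB: "b = 0" by simp
  then have dA: "a = 0" using e1 by simp
  show ?thesis
  proof (cases "i \<in> {A..B}")
    case True
    then consider "i = A" | "i = B" | "i \<in> {A<..<B}" by fastforce
    then show ?thesis using dA dB int unfolding a_def b_def by cases auto
  next
    case False
    then show ?thesis using hh_out[OF A0 B0 VV_rmax False] pmf_out[OF False] by simp
  qed
qed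

lemma main:
  "\<exists>rmax \<in> R_set A B \<mu>.
           (\<forall>r \<in> R_set A B \<mu>. \<forall>i. r i \<le> rmax i)
         \<and> stopping_time_enat (filt rmax) tau
         \<and> (AE \<omega> in model rmax. tau \<omega> \<noteq> \<infinity>)
         \<and> (\<forall>i. hit_prob rmax i = pmf \<mu> i)
         \<and> uniformly_integrable (model rmax) (\<lambda>t \<omega>. real_of_int (stopped \<omega> t))"
proof (intro bexI[OF _ rmax_R] conjI ballI allI)
  show "r i \<le> rmax i" if "r \<in> R_set A B \<mu>" for r i using rmax_upper[OF that] .
  show "stopping_time_enat (filt rmax) tau" by (rule stopping)
  show "AE \<omega> in model rmax. tau \<omega> \<noteq> \<infinity>" by (rule AE_finite[OF A0 B0 VV_rmax])
  have v: "valid01 rmax" using VV_rmax by (simp add: VV_def)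
  show "hit_prob rmax i = pmf \<mu> i" for i using hit_prob_eq[OF v] nu_eq_all by simp
  show "uniformly_integrable (model rmax) (\<lambda>t \<omega>. real_of_int (stopped \<omega> t))"
    by (rule UI[OF A0 B0 VV_rmax])
qed

end

theorem proposition1:
  fixes A B :: int and \<mu> :: "int pmf"
  assumes "A < 0" and "0 < B"
    and "integrable (measure_pmf \<mu>) real_of_int"
    and "measure_pmf.expectation \<mu> real_of_int = 0"
    and "measure_pmf.prob \<mu> {A..B} = 1"
    and "pmf \<mu> A > 0" and "pmf \<mu> B > 0"
  shows "\<exists>rmax \<in> R_set A B \<mu>.
           (\<forall>r \<in> R_set A B \<mu>. \<forall>i. r i \<le> rmax i)
         \<and> stopping_time_enat (filt rmax) tau
         \<and> (AE \<omega> in model rmax. tau \<omega> \<noteq> \<infinity>)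
         \<and> (\<forall>i. hit_prob rmax i = pmf \<mu> i)
         \<and> uniformly_integrable (model rmax) (\<lambda>t \<omega>. real_of_int (stopped \<omega> t))"
  using main[OF assms(1,2,5,4,6,7)] .


end
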